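(* Let $n\ge1$ and consider nonempty compact subsets of $\mathbb{R}^n$ ("regions") whose complement is nonempty. For a region $R$ and $\mathbf{x}\in\mathbb{R}^n$ let $d(R,\mathbf{x})=\inf\{\|\mathbf{x}-\mathbf{y}\|_2:\mathbf{y}\in R\}$, and similarly $d(R^c,\mathbf{x})$ for the complement $R^c=\mathbb{R}^n\setminus R$. Define the boundary dissimilarity $$d_{\mathrm{bd}}(R_1,R_2)=\begin{cases}-\min_{\mathbf{x}_2\in R_2} d(R_1^c,\mathbf{x}_2) & \text{if } R_2\subseteq R_1,\\ \sup_{\mathbf{x}_2\in R_2\setminus R_1} d(R_1,\mathbf{x}_2) & \text{otherwise.}\end{cases}$$ Then: (1) $d_{\mathrm{bd}}(R_1,R_2)\le 0$ if and only if $R_2\subseteq R_1$. Moreover, $d_{\mathrm{bd}}(R_1,R_2)=0$ if and only if $R_2$ is internally tangent to $R_1$, that is, $R_2\subseteq R_1$ and the boundaries $\partial R_1$ and $\partial R_2$ have a common point. (2) If $R_3\subseteq R_2\subseteq R_1$, then $d_{\mathrm{bd}}(R_1,R_3)\le d_{\mathrm{bd}}(R_1,R_2)$. *)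

theory Defs
  imports "HOL-Analysis.Analysis"
begin

definition region :: "'a::euclidean_space set \<Rightarrow> bool" where
  "region R \<longleftrightarrow> R \<noteq> {} \<and> compact R \<and> - R \<noteq> {}"

text \<open>Boundary dissimilarity. d(R,x) is infdist x R; the min in the first case
  is attained (continuous function on a nonempty compact set), so it is written as INF.\<close>
definition d_bd :: "'a::euclidean_space set \<Rightarrow> 'a set \<Rightarrow> real" where
  "d_bd R1 R2 =
     (if R2 \<subseteq> R1 then - (INF x2\<in>R2. infdist x2 (- R1))
      else (SUP x2\<in>R2 - R1. infdist x2 R1))"

definition internally_tangent :: "'a::euclidean_space set \<Rightarrow> 'a set \<Rightarrow> bool" where
  "internally_tangent R2 R1 \<longleftrightarrow> R2 \<subseteq> R1 \<and> frontier R1 \<inter> frontier R2 \<noteq> {}"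

end

theory Submission
  imports Defs
begin

lemma inf_attained:
  fixes R1 R2 :: "'a::euclidean_space set"
  assumes "R2 \<noteq> {}" "compact R2"
  shows "\<exists>x\<in>R2. (INF y\<in>R2. infdist y S) = infdist x S"
proof -
  have c: "continuous_on R2 (\<lambda>y. infdist y S)"
    by (intro continuous_intros)
  obtain x where x: "x \<in> R2" "\<And>y. y \<in> R2 \<Longrightarrow> infdist x S \<le> infdist y S"
    using continuous_attains_inf[OF assms(2,1) c] by blast
  have "(INF y\<in>R2. infdist y S) = infdist x S"
    by (rule antisym, rule cINF_lower, use x in auto, intro bdd_belowI2[where m=0] infdist_nonneg)
       (rule cINF_greatest, use assms x in auto)
  then show ?thesis using x by blast
qed

lemma inf_nonneg:
  assumes "R2 \<noteq> {}"
  shows "0 \<le> (INF y\<in>R2. infdist y S)"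
  using assms by (intro cINF_greatest) (auto intro: infdist_nonneg)

theorem proposition3:
  fixes R1 R2 R3 :: "'a::euclidean_space set"
  assumes "region R1" and "region R2"
  shows "(d_bd R1 R2 \<le> 0 \<longleftrightarrow> R2 \<subseteq> R1)
         \<and> (d_bd R1 R2 = 0 \<longleftrightarrow> internally_tangent R2 R1)
         \<and> (region R3 \<and> R3 \<subseteq> R2 \<and> R2 \<subseteq> R1 \<longrightarrow> d_bd R1 R3 \<le> d_bd R1 R2)"
proof -
  have ne1: "R1 \<noteq> {}" and c1: "compact R1" and ne2: "R2 \<noteq> {}" and c2: "compact R2"
    using assms by (auto simp: region_def)
  have cl1: "closed R1" using c1 compact_imp_closed by blast
  have cl2: "closed R2" using c2 compact_imp_closed by blast
  have pos: "d_bd R1 R2 > 0" if ns: "\<not> R2 \<subseteq> R1"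
  proof -
    obtain x where x: "x \<in> R2" "x \<notin> R1" using ns by blast
    have "compact ((\<lambda>y. infdist y R1) ` R2)"
      by (intro compact_continuous_image c2 continuous_intros)
    hence "bdd_above ((\<lambda>y. infdist y R1) ` R2)"
      by (intro bounded_imp_bdd_above compact_imp_bounded)
    hence bd: "bdd_above ((\<lambda>y. infdist y R1) ` (R2 - R1))"
      by (rule bdd_above_mono) auto
    have "0 < infdist x R1" using infdist_pos_not_in_closed[OF cl1 ne1 x(2)] .
    also have "\<dots> \<le> (SUP y\<in>R2 - R1. infdist y R1)"
      using x bd by (intro cSUP_upper) auto
    finally show ?thesis using ns by (simp add: d_bd_def)
  qed
  have P1: "d_bd R1 R2 \<le> 0 \<longleftrightarrow> R2 \<subseteq> R1"
  proof (cases "R2 \<subseteq> R1")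
    case True thus ?thesis using inf_nonneg[OF ne2, of "- R1"] by (simp add: d_bd_def)
  next
    case False thus ?thesis using pos[OF False] by simp
  qed
  have P2: "d_bd R1 R2 = 0 \<longleftrightarrow> internally_tangent R2 R1"
  proof
    assume h: "d_bd R1 R2 = 0"
    hence sub: "R2 \<subseteq> R1" using P1 by linarith
    obtain x where x: "x \<in> R2" "(INF y\<in>R2. infdist y (- R1)) = infdist x (- R1)"
      using inf_attained[OF ne2 c2] by blast
    have "infdist x (- R1) = 0" using h sub x by (simp add: d_bd_def)
    hence xc: "x \<in> closure (- R1)"
      using assms(1) by (simp add: in_closure_iff_infdist_zero region_def)
    have "closure (- R1) \<subseteq> closure (- R2)" using sub by (intro closure_mono) auto
    hence "x \<in> frontier R2" "x \<in> frontier R1"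
      using xc x sub cl1 cl2 by (auto simp: frontier_def closure_complement)
    thus "internally_tangent R2 R1" using sub by (auto simp: internally_tangent_def)
  next
    assume h: "internally_tangent R2 R1"
    then obtain x where sub: "R2 \<subseteq> R1" and x: "x \<in> frontier R1" "x \<in> frontier R2"
      by (auto simp: internally_tangent_def)
    have xR2: "x \<in> R2" using x cl2 frontier_subset_closed by blast
    have "x \<in> closure (- R1)" using x by (auto simp: frontier_def closure_complement)
    hence "infdist x (- R1) = 0"
      using assms(1) by (simp add: in_closure_iff_infdist_zero region_def)
    hence "(INF y\<in>R2. infdist y (- R1)) \<le> 0"
      using xR2 by (metis bdd_belowI2 cINF_lower infdist_nonneg)
    thus "d_bd R1 R2 = 0" using sub inf_nonneg[OF ne2, of "- R1"] by (simp add: d_bd_def)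
  qed
  have P3: "d_bd R1 R3 \<le> d_bd R1 R2" if h: "region R3" "R3 \<subseteq> R2" "R2 \<subseteq> R1"
  proof -
    have "R3 \<noteq> {}" using h by (auto simp: region_def)
    hence "(INF y\<in>R2. infdist y (- R1)) \<le> (INF y\<in>R3. infdist y (- R1))"
      using h by (intro cINF_superset_mono) (auto intro: bdd_belowI2[where m=0] infdist_nonneg)
    thus ?thesis using h by (simp add: d_bd_def)
  qed
  show ?thesis using P1 P2 P3 by blast
qed

end
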